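(* Let $H=(U,(A_1,\dots,A_m))$ be a harmonic set system with $|U|<m(m-2)$ and $m\ge 51$. Then $H_{\{1,3,5\},\{7,9,11\}}=\emptyset$.
   Context: For $I_1,I_2\subseteq[m]$, $H_{I_1,I_2}=\bigcap_{i\in I_1}A_i\cap\bigcap_{i\in I_2}(U\setminus A_i)$ (empty intersection $=U$), $H_I=H_{I,\emptyset}$. The run decomposition of a finite set $I$ of positive integers is the partition of sizes, in nonincreasing order, of the maximal runs of consecutive integers in $I$. $H$ is harmonic if $|H_I|=|H_J|$ whenever $I,J\subseteq[m]$ have the same run decomposition. *)

theory Defs
  imports Main "HOL-Library.Multiset"
begin

text \<open>Set system: ground set U and sets A 1, ..., A m (indices 1..m).
  H_{I1,I2} = intersection of the A i (i in I1) and of the complements U - A i (i in I2),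
  the empty intersection being U.\<close>
definition Hsys :: "'a set \<Rightarrow> (nat \<Rightarrow> 'a set) \<Rightarrow> nat set \<Rightarrow> nat set \<Rightarrow> 'a set" where
  "Hsys U A I1 I2 = U \<inter> (\<Inter>i\<in>I1. A i) \<inter> (\<Inter>i\<in>I2. U - A i)"

definition runs :: "nat set \<Rightarrow> nat set set" where
  "runs I = {{a..b} | a b. a \<le> b \<and> {a..b} \<subseteq> I \<and> (a = 0 \<or> a - 1 \<notin> I) \<and> Suc b \<notin> I}"

definition run_decomposition :: "nat set \<Rightarrow> nat list" where
  "run_decomposition I = rev (sorted_list_of_multiset (image_mset card (mset_set (runs I))))"

definition harmonic :: "'a set \<Rightarrow> (nat \<Rightarrow> 'a set) \<Rightarrow> nat \<Rightarrow> bool" where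
  "harmonic U A m \<longleftrightarrow> (\<forall>I J. I \<subseteq> {1..m} \<longrightarrow> J \<subseteq> {1..m} \<longrightarrow>
      run_decomposition I = run_decomposition J \<longrightarrow>
      card (Hsys U A I {}) = card (Hsys U A J {}))"

end

theory Submission
  imports Defs "HOL.Binomial_Plus"
begin

lemma runs_odd:
  assumes "J \<subseteq> {i. odd i}"
  shows "runs J = (\<lambda>a. {a}) ` J"
proof (rule set_eqI, rule iffI)
  fix R assume "R \<in> runs J"
  then obtain a b where R: "R = {a..b}" "a \<le> b" "{a..b} \<subseteq> J" unfolding runs_def by blast
  have "a = b"
  proof (rule ccontr)
    assume "a \<noteq> b"
    then have "a \<in> J" "Suc a \<in> J" using R by auto
    then have "odd a" "odd (Suc a)" using assms by blast+
    then show False by simp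
  qed
  then show "R \<in> (\<lambda>a. {a}) ` J" using R by auto
next
  fix R assume "R \<in> (\<lambda>a. {a}) ` J"
  then obtain a where a: "R = {a}" "a \<in> J" by auto
  then have "odd a" using assms by auto
  have "Suc a \<notin> J" using \<open>odd a\<close> assms by auto
  moreover have "a - 1 \<notin> J"
  proof
    assume "a - 1 \<in> J"
    then have "odd (a - 1)" using assms by blast
    with \<open>odd a\<close> show False by (cases a) auto
  qed
  ultimately have "a = 0 \<or> a - 1 \<notin> J" "Suc a \<notin> J" by auto
  then show "R \<in> runs J" unfolding runs_def using a by (auto intro!: exI[of _ a])
qed

lemma rd_odd:
  assumes "J \<subseteq> {i. odd i}"
  shows "run_decomposition J = rev (sorted_list_of_multiset (replicate_mset (card J) (1::nat)))"
proof -
  have "image_mset card (mset_set (runs J)) = image_mset card (image_mset (\<lambda>a. {a}) (mset_set J))"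
    using runs_odd[OF assms] by (simp add: image_mset_mset_set inj_on_def)
  also have "\<dots> = image_mset (\<lambda>_. 1) (mset_set J)" by (simp add: multiset.map_comp o_def)
  also have "\<dots> = replicate_mset (card J) 1" by (simp add: image_mset_const_eq)
  finally show ?thesis unfolding run_decomposition_def by simp
qed

lemma perm_exists:
  assumes "finite W" "T \<subseteq> W" "T' \<subseteq> W" "card T = card T'"
  shows "\<exists>p. bij_betw p W W \<and> p ` T = T'"
proof -
  have fT: "finite T" "finite T'" using assms finite_subset by auto
  obtain f where f: "bij_betw f T T'" using finite_same_card_bij[OF fT assms(4)] by blast
  have fD: "finite (W - T)" "finite (W - T')" using assms by auto
  have "card (W - T) = card (W - T')" using assms fT by (simp add: card_Diff_subset)
  then obtain g where g: "bij_betw g (W - T) (W - T')"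
    using finite_same_card_bij[OF fD] by blast
  define p where "p = (\<lambda>x. if x \<in> T then f x else g x)"
  have "bij_betw p T T' = bij_betw f T T'" by (rule bij_betw_cong) (simp add: p_def)
  then have "bij_betw p T T'" using f by simp
  moreover have "bij_betw p (W - T) (W - T') = bij_betw g (W - T) (W - T')"
    by (rule bij_betw_cong) (simp add: p_def)
  then have "bij_betw p (W - T) (W - T')" using g by simp
  ultimately have "bij_betw p (T \<union> (W - T)) (T' \<union> (W - T'))"
    by (rule bij_betw_combine) auto
  moreover have "T \<union> (W - T) = W" "T' \<union> (W - T') = W" using assms by auto
  ultimately have "bij_betw p W W" by simp
  moreover have "p ` T = T'" using \<open>bij_betw p T T'\<close> by (simp add: bij_betw_def)
  ultimately show ?thesis by blast
qed

lemma fibre_sum: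
  assumes "finite U" "finite W" "\<forall>x\<in>U. S x \<subseteq> W"
  shows "card {x\<in>U. T \<subseteq> S x} = (\<Sum>J\<in>{J. T \<subseteq> J \<and> J \<subseteq> W}. card {x\<in>U. S x = J})"
proof -
  have "{x\<in>U. T \<subseteq> S x} = (\<Union>J\<in>{J. T \<subseteq> J \<and> J \<subseteq> W}. {x\<in>U. S x = J})"
    using assms by auto
  moreover have "finite {J. T \<subseteq> J \<and> J \<subseteq> W}" using assms(2) by simp
  moreover have "card (\<Union>J\<in>{J. T \<subseteq> J \<and> J \<subseteq> W}. {x\<in>U. S x = J}) = (\<Sum>J\<in>{J. T \<subseteq> J \<and> J \<subseteq> W}. card {x\<in>U. S x = J})"
    by (rule card_UN_disjoint) (use assms in auto)
  ultimately show ?thesis by simp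
qed

lemma exch:
  assumes "finite U" "finite W" "\<forall>x\<in>U. S x \<subseteq> W"
    and N: "\<And>J J'. J \<subseteq> W \<Longrightarrow> J' \<subseteq> W \<Longrightarrow> card J = card J' \<Longrightarrow>
        card {x\<in>U. J \<subseteq> S x} = card {x\<in>U. J' \<subseteq> S x}"
  shows "\<forall>T T'. T \<subseteq> W \<longrightarrow> T' \<subseteq> W \<longrightarrow> card T = card T' \<longrightarrow> card W - card T = n \<longrightarrow>
     card {x\<in>U. S x = T} = card {x\<in>U. S x = T'}"
proof (induction n rule: less_induct)
  case (less n)
  show ?case
  proof (intro allI impI)
    fix T T' assume T: "T \<subseteq> W" "T' \<subseteq> W" "card T = card T'" "card W - card T = n"
    define c where "c J = card {x\<in>U. S x = J}" for J
    obtain p where p: "bij_betw p W W" "p ` T = T'" using perm_exists[OF assms(2) T(1-3)] by blast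
    define Js where "Js T = {J. T \<subseteq> J \<and> J \<subseteq> W}" for T
    have sumeq: "card {x\<in>U. T \<subseteq> S x} = (\<Sum>J\<in>Js T. c J)" for T
      unfolding Js_def c_def by (rule fibre_sum[OF assms(1-3)])
    have fin: "finite (Js T)" for T unfolding Js_def using assms(2) by simp
    have s1: "(\<Sum>J\<in>Js T. c J) = c T + (\<Sum>J\<in>Js T - {T}. c J)"
      using fin[of T] T(1) by (subst sum.remove[of _ T]) (auto simp: Js_def)
    have s2: "(\<Sum>J\<in>Js T'. c J) = c T' + (\<Sum>J\<in>Js T' - {T'}. c J)"
      using fin[of T'] T(2) by (subst sum.remove[of _ T']) (auto simp: Js_def)
    have injp: "inj_on p W" using p(1) by (simp add: bij_betw_def)
    have pO: "p ` W = W" using p(1) by (simp add: bij_betw_def)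
    have inj: "inj_on (\<lambda>J. p ` J) (Js T - {T})"
      unfolding Js_def inj_on_def using injp by (auto simp: inj_on_image_eq_iff)
    have img: "(\<lambda>J. p ` J) ` (Js T - {T}) = Js T' - {T'}"
    proof (rule set_eqI, rule iffI)
      fix J' assume "J' \<in> (\<lambda>J. p ` J) ` (Js T - {T})"
      then obtain J where J: "J' = p ` J" "T \<subseteq> J" "J \<subseteq> W" "J \<noteq> T" unfolding Js_def by auto
      have "p ` J \<noteq> p ` T" using J T(1) injp by (simp add: inj_on_image_eq_iff)
      then show "J' \<in> Js T' - {T'}" unfolding Js_def using J p pO by auto
    next
      fix J' assume "J' \<in> Js T' - {T'}"
      then have J': "T' \<subseteq> J'" "J' \<subseteq> W" "J' \<noteq> T'" unfolding Js_def by auto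
      define J where "J = W \<inter> p -` J'"
      have "p ` J = J'"
      proof
        show "p ` J \<subseteq> J'" unfolding J_def by auto
        show "J' \<subseteq> p ` J"
        proof
          fix y assume "y \<in> J'"
          then have "y \<in> p ` W" using J'(2) pO by auto
          then obtain x where "x \<in> W" "y = p x" by auto
          then show "y \<in> p ` J" unfolding J_def using \<open>y \<in> J'\<close> by auto
        qed
      qed
      moreover have "T \<subseteq> J" unfolding J_def using T(1) J' p(2) by auto
      moreover have "J \<noteq> T"
      proof
        assume "J = T"
        then have "J' = T'" using \<open>p ` J = J'\<close> p(2) by simp
        with J'(3) show False by simp
      qed
      moreover have "J \<subseteq> W" unfolding J_def by auto
      ultimately have "J \<in> Js T - {T}" unfolding Js_def by auto
      then show "J' \<in> (\<lambda>J. p ` J) ` (Js T - {T})" using \<open>p ` J = J'\<close> by blast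
    qed
    have ih: "c J = c (p ` J)" if "J \<in> Js T - {T}" for J
    proof -
      have J: "T \<subseteq> J" "J \<subseteq> W" "J \<noteq> T" using that unfolding Js_def by auto
      have fO: "finite J" using J(2) assms(2) finite_subset by auto
      have ct: "card T < card J" using J fO by (simp add: psubset_card_mono)
      have cJO: "card J \<le> card W" using J(2) assms(2) card_mono by auto
      have cp: "card (p ` J) = card J" using injp J(2) by (simp add: card_image inj_on_subset)
      have pJ: "p ` J \<subseteq> W" using J(2) pO by auto
      have lt: "card W - card J < n" using ct cJO T(4) by linarith
      have H: "\<forall>T T'. T \<subseteq> W \<longrightarrow> T' \<subseteq> W \<longrightarrow> card T = card T' \<longrightarrow> card W - card T = card W - card J \<longrightarrow>
     card {x\<in>U. S x = T} = card {x\<in>U. S x = T'}"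
        by (rule less.IH[OF lt])
      have "card {x\<in>U. S x = J} = card {x\<in>U. S x = p ` J}"
        using H[rule_format, OF J(2) pJ cp[symmetric] refl] .
      then show ?thesis unfolding c_def .
    qed
    have "(\<Sum>J\<in>Js T - {T}. c J) = (\<Sum>J\<in>Js T - {T}. c (p ` J))"
      using ih by (rule sum.cong[OF refl])
    also have "\<dots> = (\<Sum>J\<in>Js T' - {T'}. c J)"
      using sum.reindex[OF inj, of c] img by simp
    finally have "(\<Sum>J\<in>Js T - {T}. c J) = (\<Sum>J\<in>Js T' - {T'}. c J)" .
    moreover have "(\<Sum>J\<in>Js T. c J) = (\<Sum>J\<in>Js T'. c J)"
      using N[OF T(1-3)] sumeq by metis
    ultimately show "card {x\<in>U. S x = T} = card {x\<in>U. S x = T'}"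
      using s1 s2 unfolding c_def by linarith
  qed
qed


lemma choose3_bound:
  assumes "M \<ge> 26" "m \<le> 2 * M"
  shows "m * (m - 2) \<le> M choose 3"
proof -
  obtain n where n: "M = Suc n" using assms by (cases M) auto
  have e1: "3 * (M choose 3) = M * (n choose 2)"
    using Suc_times_binomial_eq[of n 2] n by (simp add: numeral_eq_Suc)
  obtain k where k: "n = Suc k" using assms n by (cases n) auto
  have e2: "2 * (n choose 2) = n * (n - 1)"
    using Suc_times_binomial_eq[of k 1] k by (simp add: numeral_eq_Suc)
  have n25: "n \<ge> 25" using assms n by simp
  have "m * (m - 2) \<le> (2 * M) * (2 * M - 2)"
    using assms by (intro mult_le_mono) auto
  also have "\<dots> = 4 * (M * n)" using n by simp
  also have "\<dots> * 6 \<le> (M * n) * (n - 1)" 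
  proof -
    have "4 * (M * n) * 6 = (M * n) * 24" by simp
    also have "\<dots> \<le> (M * n) * (n - 1)" using n25 by (intro mult_le_mono2) linarith
    finally show ?thesis .
  qed
  finally have "6 * (m * (m - 2)) \<le> M * (n * (n - 1))" by (simp add: ac_simps)
  also have "\<dots> = 6 * (M choose 3)"
  proof -
    have "6 * (M choose 3) = 2 * (3 * (M choose 3))" by simp
    also have "\<dots> = 2 * (M * (n choose 2))" using e1 by simp
    also have "\<dots> = M * (2 * (n choose 2))" by simp
    also have "\<dots> = M * (n * (n - 1))" using e2 by simp
    finally show ?thesis by simp
  qed
  finally show ?thesis by simp
qed

theorem proposition4p20:
  fixes U :: "'a set" and A :: "nat \<Rightarrow> 'a set" and m :: nat
  assumes "finite U"
    and "\<forall>i\<in>{1..m}. A i \<subseteq> U"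
    and "harmonic U A m"
    and "card U < m * (m - 2)"
    and "m \<ge> 51"
  shows "Hsys U A {1, 3, 5} {7, 9, 11} = {}"
proof (rule ccontr)
  assume "Hsys U A {1, 3, 5} {7, 9, 11} \<noteq> {}"
  then obtain x0 where x0: "x0 \<in> Hsys U A {1, 3, 5} {7, 9, 11}" by blast
  have x0U: "x0 \<in> U" and x0in: "x0 \<in> A 1" "x0 \<in> A 3" "x0 \<in> A 5"
    and x0out: "x0 \<notin> A 7" "x0 \<notin> A 9" "x0 \<notin> A 11"
    using x0 unfolding Hsys_def by auto
  define M where "M = (m + 1) div 2"
  define W where "W = (\<lambda>i. 2 * i + 1) ` {..<M}"
  have M26: "M \<ge> 26" using assms(5) unfolding M_def by simp
  have mM: "m \<le> 2 * M" unfolding M_def by simp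
  have Wsub: "W \<subseteq> {1..m}"
  proof
    fix j assume "j \<in> W"
    then obtain i where "i < M" "j = 2 * i + 1" unfolding W_def by auto
    then show "j \<in> {1..m}" unfolding M_def by simp
  qed
  have Wodd: "W \<subseteq> {i. odd i}" unfolding W_def by auto
  have injW: "inj_on (\<lambda>i::nat. 2 * i + 1) {..<M}" by (simp add: inj_on_def)
  have cW: "card W = M" unfolding W_def using card_image[OF injW] by simp
  have fW: "finite W" unfolding W_def by simp
  have memW: "2 * i + 1 \<in> W" if "i < M" for i unfolding W_def using that by blast
  have W1: "1 \<in> W" "3 \<in> W" "5 \<in> W" "7 \<in> W" "9 \<in> W" "11 \<in> W"
    using memW[of 0] memW[of 1] memW[of 2] memW[of 3] memW[of 4] memW[of 5] M26 by simp_all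
  define S where "S x = {i\<in>W. x \<in> A i}" for x
  have SW: "\<forall>x\<in>U. S x \<subseteq> W" unfolding S_def by auto
  have Hs: "Hsys U A J {} = {x\<in>U. J \<subseteq> S x}" if "J \<subseteq> W" for J
    using that unfolding Hsys_def S_def by auto
  have N: "card {x\<in>U. J \<subseteq> S x} = card {x\<in>U. J' \<subseteq> S x}"
    if J: "J \<subseteq> W" "J' \<subseteq> W" "card J = card J'" for J J'
  proof -
    have "run_decomposition J = run_decomposition J'"
      using rd_odd[of J] rd_odd[of J'] J Wodd by simp
    moreover have "J \<subseteq> {1..m}" "J' \<subseteq> {1..m}" using J Wsub by auto
    ultimately have "card (Hsys U A J {}) = card (Hsys U A J' {})"
      using assms(3) unfolding harmonic_def by blast
    then show ?thesis using Hs J by simp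
  qed
  have ex: "card {x\<in>U. S x = T} = card {x\<in>U. S x = T'}"
    if "T \<subseteq> W" "T' \<subseteq> W" "card T = card T'" for T T'
    apply (rule exch[OF assms(1) fW SW, rule_format, where n="card W - card T"])
    apply (rule N; assumption)
    using that by auto
  define T0 where "T0 = S x0"
  define k where "k = card T0"
  have T0W: "T0 \<subseteq> W" unfolding T0_def S_def by auto
  have "{1, 3, 5} \<subseteq> T0" unfolding T0_def S_def using W1 x0in by auto
  then have "card {1, 3, 5::nat} \<le> card T0" by (rule card_mono[OF finite_subset[OF T0W fW]])
  then have k3: "3 \<le> k" unfolding k_def by simp
  have "T0 \<subseteq> W - {7, 9, 11}" using T0W x0out unfolding T0_def S_def by auto
  then have "k \<le> card (W - {7, 9, 11})" unfolding k_def using fW by (simp add: card_mono)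
  also have "card (W - {7, 9, 11}) = M - 3" using W1 cW fW by (simp add: card_Diff_subset)
  finally have kM: "k \<le> M - 3" .
  have pos: "card {x\<in>U. S x = T0} \<ge> 1"
  proof -
    have "x0 \<in> {x\<in>U. S x = T0}" using x0U T0_def by simp
    moreover have "finite {x\<in>U. S x = T0}" using assms(1) by simp
    ultimately have "card {x\<in>U. S x = T0} > 0" using card_gt_0_iff by blast
    then show ?thesis by simp
  qed
  have sub: "{T. T \<subseteq> W \<and> card T = k} \<subseteq> S ` U"
  proof
    fix T assume "T \<in> {T. T \<subseteq> W \<and> card T = k}"
    then have T: "T \<subseteq> W" "card T = k" by auto
    have "card {x\<in>U. S x = T} \<ge> 1" using ex[OF T(1) T0W] T(2) k_def pos by simp
    then have "{x\<in>U. S x = T} \<noteq> {}" by (metis card.empty not_one_le_zero)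
    then show "T \<in> S ` U" by auto
  qed
  have "M choose k = card {T. T \<subseteq> W \<and> card T = k}" using n_subsets[OF fW] cW by simp
  also have "\<dots> \<le> card (S ` U)" using sub assms(1) by (simp add: card_mono)
  also have "\<dots> \<le> card U" using assms(1) by (rule card_image_le)
  finally have c1: "M choose k \<le> card U" .
  have c2: "M choose 3 \<le> M choose k"
  proof (cases "2 * k \<le> M")
    case True
    then show ?thesis using k3 by (intro binomial_mono) auto
  next
    case False
    have "M choose k = M choose (M - k)" using kM by (intro binomial_symmetric) simp
    moreover have "M choose 3 \<le> M choose (M - k)" using kM False by (intro binomial_mono) auto
    ultimately show ?thesis by simp
  qed
  have "m * (m - 2) \<le> M choose 3" using choose3_bound[OF M26 mM] .
  with c1 c2 assms(4) show False by linarith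
qed

end
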